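(* Let $A\in M_n(\mathcal F)$ be strongly nonsingular, i.e. $A^m$ is nonsingular for every $m\in\mathbb N$. Then $A$ has no nonzero degenerate generalized eigenvector: there is no nonzero tangible vector $v\in(\mathcal T\cup\{0_{\mathcal F}\})^n$ such that $A^mv\in(\mathcal G\cup\{0_{\mathcal F}\})^n$ for some $m\in\mathbb N$.
   Context: $\mathcal F=\mathcal T\cup\mathcal G\cup\{0_{\mathcal F}\}$ is the standard supertropical semifield: $\mathcal T$ is an ordered abelian group of tangible elements (written multiplicatively), $\mathcal G$ its ghost copy via $a\mapsto a^\nu$, $0_{\mathcal F}=-\infty$; $a+b$ is the element of larger $\nu$-value if these differ and $a+b=a^\nu$ if $a^\nu=b^\nu$; products multiply $\nu$-values and are tangible iff all factors are. $\det(A)=\sum_{\sigma\in S_n}\prod_ia_{i,\sigma(i)}$, and $A$ is nonsingular if $\det(A)\in\mathcal T$. A tangible vector $v$ is a degenerate generalized eigenvector of $A$ if $A^mv$ is ghost (all coordinates in $\mathcal G\cup\{0_{\mathcal F}\}$) for some $m$. *)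

theory Defs
  imports Main "HOL-Combinatorics.Permutations"
begin

text \<open>The standard supertropical semifield over an ordered abelian group of tangible
values. The group of tangible elements is written additively here (logarithmic
notation): Tan a * Tan b = Tan (a + b), the unit is Tan 0. Zero is 0_F = -infinity,
Gh a is the ghost copy a^nu of Tan a.\<close>

datatype 'a st = Zero | Tan 'a | Gh 'a

fun nuv :: "'a st \<Rightarrow> 'a" where
  "nuv (Tan a) = a"
| "nuv (Gh a) = a"
| "nuv Zero = undefined"

fun st_add :: "'a::linorder st \<Rightarrow> 'a st \<Rightarrow> 'a st" where
  "st_add Zero y = y"
| "st_add x Zero = x"
| "st_add x y = (if nuv x < nuv y then y else if nuv y < nuv x then x else Gh (nuv x))"

fun st_mult :: "'a::plus st \<Rightarrow> 'a st \<Rightarrow> 'a st" where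
  "st_mult Zero y = Zero"
| "st_mult x Zero = Zero"
| "st_mult (Tan a) (Tan b) = Tan (a + b)"
| "st_mult x y = Gh (nuv x + nuv y)"

instantiation st :: (linordered_ab_group_add) comm_monoid_add
begin
definition zero_st_def: "0 = Zero"
definition plus_st_def: "x + y = st_add x y"
instance
proof
  fix a b c :: "'a st"
  show "a + b + c = a + (b + c)"
    unfolding plus_st_def
    by (cases a; cases b; cases c) auto
  show "a + b = b + a"
    unfolding plus_st_def
    by (cases a; cases b) auto
  show "0 + a = a"
    unfolding plus_st_def zero_st_def by simp
qed
end

instantiation st :: (linordered_ab_group_add) comm_monoid_mult
begin
definition one_st_def: "1 = Tan 0"
definition times_st_def: "x * y = st_mult x y"
instance
proof
  fix a b c :: "'a st"
  show "a * b * c = a * (b * c)"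
    unfolding times_st_def
    by (cases a; cases b; cases c) (auto simp: add.assoc)
  show "a * b = b * a"
    unfolding times_st_def
    by (cases a; cases b) (auto simp: add.commute)
  show "1 * a = a"
    unfolding times_st_def one_st_def by (cases a) auto
qed
end

definition tangible :: "'a st \<Rightarrow> bool" where
  "tangible x \<longleftrightarrow> (\<exists>a. x = Tan a)"

definition ghost_or_zero :: "'a st \<Rightarrow> bool" where
  "ghost_or_zero x \<longleftrightarrow> x = Zero \<or> (\<exists>a. x = Gh a)"

type_synonym ('a, 'n) stmat = "'n \<Rightarrow> 'n \<Rightarrow> 'a st"
type_synonym ('a, 'n) stvec = "'n \<Rightarrow> 'a st"

definition st_det :: "('a::linordered_ab_group_add, 'n::finite) stmat \<Rightarrow> 'a st" where
  "st_det A = (\<Sum>\<sigma>\<in>{\<sigma>. \<sigma> permutes (UNIV :: 'n set)}. \<Prod>i\<in>UNIV. A i (\<sigma> i))"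

definition st_nonsingular :: "('a::linordered_ab_group_add, 'n::finite) stmat \<Rightarrow> bool" where
  "st_nonsingular A \<longleftrightarrow> tangible (st_det A)"

definition st_matmul :: "('a::linordered_ab_group_add, 'n::finite) stmat \<Rightarrow> ('a, 'n) stmat \<Rightarrow> ('a, 'n) stmat" where
  "st_matmul A B = (\<lambda>i j. \<Sum>k\<in>UNIV. A i k * B k j)"

definition st_id :: "('a::linordered_ab_group_add, 'n) stmat" where
  "st_id = (\<lambda>i j. if i = j then 1 else 0)"

fun st_matpow :: "('a::linordered_ab_group_add, 'n::finite) stmat \<Rightarrow> nat \<Rightarrow> ('a, 'n) stmat" where
  "st_matpow A 0 = st_id"
| "st_matpow A (Suc m) = st_matmul A (st_matpow A m)"

definition st_mulvec :: "('a::linordered_ab_group_add, 'n::finite) stmat \<Rightarrow> ('a, 'n) stvec \<Rightarrow> ('a, 'n) stvec" where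
  "st_mulvec A v = (\<lambda>i. \<Sum>k\<in>UNIV. A i k * v k)"

definition strongly_nonsingular :: "('a::linordered_ab_group_add, 'n::finite) stmat \<Rightarrow> bool" where
  "strongly_nonsingular A \<longleftrightarrow> (\<forall>m\<ge>1. st_nonsingular (st_matpow A m))"

definition tangible_vec :: "('a, 'n) stvec \<Rightarrow> bool" where
  "tangible_vec v \<longleftrightarrow> (\<forall>i. v i = Zero \<or> tangible (v i))"

definition ghost_vec :: "('a, 'n) stvec \<Rightarrow> bool" where
  "ghost_vec v \<longleftrightarrow> (\<forall>i. ghost_or_zero (v i))"

definition degenerate_gen_eigenvector :: "('a::linordered_ab_group_add, 'n::finite) stmat \<Rightarrow> ('a, 'n) stvec \<Rightarrow> bool" where
  "degenerate_gen_eigenvector A v \<longleftrightarrow> tangible_vec v \<and> (\<exists>m. ghost_vec (st_mulvec (st_matpow A m) v))"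

end

theory Submission
  imports Defs
begin

lemma zero_st[simp]: "(0::'a::linordered_ab_group_add st) = Zero"
  by (simp add: zero_st_def)

lemma add_Zero_r[simp]: "(x::'a::linordered_ab_group_add st) + Zero = x"
  by (cases x) (auto simp: plus_st_def)

lemma add_Zero_l[simp]: "Zero + (x::'a::linordered_ab_group_add st) = x"
  by (simp add: plus_st_def)

lemma add_Zero_iff: "(x::'a::linordered_ab_group_add st) + y = Zero \<longleftrightarrow> x = Zero \<and> y = Zero"
  by (cases x; cases y) (auto simp: plus_st_def)

lemma add_nuv: "(x::'a::linordered_ab_group_add st) \<noteq> Zero \<Longrightarrow> nuv x \<le> nuv (x + y) \<and> x + y \<noteq> Zero"
  by (cases x; cases y) (auto simp: plus_st_def)

lemma add_lt: "(x = Zero \<or> nuv x < a) \<Longrightarrow> (y = Zero \<or> nuv y < a) \<Longrightarrow>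
   ((x::'a::linordered_ab_group_add st) + y = Zero \<or> nuv (x + y) < a)"
  by (cases x; cases y) (auto simp: plus_st_def)

lemma add_Tan: "(y = Zero \<or> nuv y < b) \<Longrightarrow> Tan b + (y::'a::linordered_ab_group_add st) = Tan b"
  by (cases y) (auto simp: plus_st_def)

lemma mult_nz: "(x::'a::linordered_ab_group_add st) \<noteq> Zero \<Longrightarrow> y \<noteq> Zero \<Longrightarrow>
   x * y \<noteq> Zero \<and> nuv (x * y) = nuv x + nuv y \<and> (tangible (x * y) \<longleftrightarrow> tangible x \<and> tangible y)"
  by (cases x; cases y) (auto simp: times_st_def tangible_def)

lemma mult_Zero_iff: "(x::'a::linordered_ab_group_add st) * y = Zero \<longleftrightarrow> x = Zero \<or> y = Zero"
  by (cases x; cases y) (auto simp: times_st_def)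

lemma sum_Zero: "finite F \<Longrightarrow> sum g F = (Zero::'a::linordered_ab_group_add st) \<Longrightarrow> \<forall>y\<in>F. g y = Zero"
  by (induction F rule: finite_induct) (auto simp: add_Zero_iff)

lemma sum_ge: "finite F \<Longrightarrow> y \<in> F \<Longrightarrow> g y \<noteq> (Zero::'a::linordered_ab_group_add st) \<Longrightarrow>
   sum g F \<noteq> Zero \<and> nuv (g y) \<le> nuv (sum g F)"
proof (induction F rule: finite_induct)
  case empty then show ?case by simp
next
  case (insert x F)
  show ?case
  proof (cases "y = x")
    case True
    then show ?thesis using insert add_nuv[of "g x" "sum g F"] by simp
  next
    case False
    then have "sum g F \<noteq> Zero \<and> nuv (g y) \<le> nuv (sum g F)" using insert by auto
    then show ?thesis using insert add_nuv[of "sum g F" "g x"] by (simp add: add.commute, metis add.commute order_trans)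
  qed
qed

lemma sum_lt: "finite Y \<Longrightarrow> \<forall>y\<in>Y. g y = Zero \<or> nuv (g y) < a \<Longrightarrow>
   sum g Y = (Zero::'a::linordered_ab_group_add st) \<or> nuv (sum g Y) < a"
proof (induction Y rule: finite_induct)
  case (insert x F)
  then show ?case using add_lt[of "g x" a "sum g F"] by simp
qed simp

lemma sum_single: "finite X \<Longrightarrow> x \<in> X \<Longrightarrow> g x = Tan b \<Longrightarrow>
   \<forall>y\<in>X-{x}. g y = Zero \<or> nuv (g y) < b \<Longrightarrow> sum g X = (Tan b::'a::linordered_ab_group_add st)"
proof -
  assume a: "finite X" "x \<in> X" "g x = Tan b" "\<forall>y\<in>X-{x}. g y = Zero \<or> nuv (g y) < b"
  have "sum g X = g x + sum g (X - {x})" using a by (simp add: sum.remove)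
  moreover have "sum g (X - {x}) = Zero \<or> nuv (sum g (X - {x})) < b"
    using a by (intro sum_lt) auto
  ultimately show ?thesis using a add_Tan by simp
qed

lemma sum_Tan: "finite X \<Longrightarrow> sum g X = (Tan a::'a::linordered_ab_group_add st) \<Longrightarrow>
   \<exists>x\<in>X. g x = Tan a \<and> (\<forall>y\<in>X-{x}. g y = Zero \<or> nuv (g y) < a)"
proof (induction X arbitrary: a rule: finite_induct)
  case empty then show ?case by simp
next
  case (insert x F)
  have e: "g x + sum g F = Tan a" using insert by simp
  show ?case
  proof (cases "g x = Zero")
    case True
    then have "sum g F = Tan a" using e by (simp add: plus_st_def)
    then obtain y where "y \<in> F" "g y = Tan a" "\<forall>z\<in>F-{y}. g z = Zero \<or> nuv (g z) < a"
      using insert by blast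
    then show ?thesis using True by (intro bexI[of _ y]) auto
  next
    case gx: False
    show ?thesis
    proof (cases "sum g F = Zero")
      case True
      then have "g x = Tan a" using e by simp
      moreover have "\<forall>y\<in>F. g y = Zero" using sum_Zero[OF insert(1) True] .
      ultimately show ?thesis by (intro bexI[of _ x]) auto
    next
      case sF: False
      show ?thesis
      proof (cases "nuv (g x) < nuv (sum g F)")
        case True
        then have s: "sum g F = Tan a" using e gx sF
          by (cases "g x"; cases "sum g F") (auto simp: plus_st_def)
        then obtain y where y: "y \<in> F" "g y = Tan a" "\<forall>z\<in>F-{y}. g z = Zero \<or> nuv (g z) < a"
          using insert by blast
        have "nuv (g x) < a" using True s by simp
        then show ?thesis using y by (intro bexI[of _ y]) auto
      next
        case False
        have ne: "nuv (sum g F) \<noteq> nuv (g x)" using e gx sF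
          by (cases "g x"; cases "sum g F") (auto simp: plus_st_def split: if_splits)
        with False have lt: "nuv (sum g F) < nuv (g x)" by simp
        then have gxa: "g x = Tan a" using e gx sF
          by (cases "g x"; cases "sum g F") (auto simp: plus_st_def split: if_splits)
        have "\<forall>y\<in>F. g y = Zero \<or> nuv (g y) < a"
        proof
          fix y assume "y \<in> F"
          show "g y = Zero \<or> nuv (g y) < a"
          proof (cases "g y = Zero")
            case False
            then have "nuv (g y) \<le> nuv (sum g F)" using sum_ge[OF insert(1) \<open>y\<in>F\<close>] by blast
            then show ?thesis using lt gxa by (simp add: le_less_trans)
          qed simp
        qed
        then show ?thesis using gxa insert(2) by (intro bexI[of _ x]) auto
      qed
    qed
  qed
qed

lemma prod_nz: "finite I \<Longrightarrow> \<forall>i\<in>I. g i \<noteq> (Zero::'a::linordered_ab_group_add st) \<Longrightarrow>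
   prod g I \<noteq> Zero \<and> nuv (prod g I) = (\<Sum>i\<in>I. nuv (g i)) \<and> (tangible (prod g I) \<longleftrightarrow> (\<forall>i\<in>I. tangible (g i)))"
proof (induction I rule: finite_induct)
  case empty then show ?case by (simp add: one_st_def tangible_def)
next
  case (insert x F)
  then show ?case using mult_nz[of "g x" "prod g F"] by auto
qed

lemma prod_Zero: "finite I \<Longrightarrow> i \<in> I \<Longrightarrow> g i = (Zero::'a::linordered_ab_group_add st) \<Longrightarrow> prod g I = Zero"
  by (simp add: prod.remove mult_Zero_iff)

lemma main:
  fixes B :: "('a::linordered_ab_group_add, 'n::finite) stmat"
  assumes ns: "st_nonsingular B" and vnz: "v \<noteq> (\<lambda>i. Zero)" and tv: "tangible_vec v"
    and gh: "ghost_vec (st_mulvec B v)"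
  shows False
proof -
  let ?P = "{\<sigma>. \<sigma> permutes (UNIV :: 'n set)}"
  let ?w = "\<lambda>\<sigma>. \<Prod>i\<in>UNIV. B i (\<sigma> i)"
  obtain d where "st_det B = Tan d" using ns by (auto simp: st_nonsingular_def tangible_def)
  then obtain \<sigma> where sP: "\<sigma> permutes UNIV" and sd: "?w \<sigma> = Tan d"
    and uniq: "\<forall>\<tau>\<in>?P-{\<sigma>}. ?w \<tau> = Zero \<or> nuv (?w \<tau>) < d"
    using sum_Tan[of ?P ?w d] by (auto simp: st_det_def finite_permutations)
  have bnz: "B i (\<sigma> i) \<noteq> Zero" for i
    using prod_Zero[of UNIV i "\<lambda>i. B i (\<sigma> i)"] sd by auto
  then have dsum: "d = (\<Sum>i\<in>UNIV. nuv (B i (\<sigma> i)))" and btan: "tangible (B i (\<sigma> i))" for i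
    using prod_nz[of UNIV "\<lambda>i. B i (\<sigma> i)"] sd by (auto simp: tangible_def)
  define S where "S = {k. v k \<noteq> Zero}"
  define c where "c k = nuv (v k)" for k
  have "\<exists>k'. k' \<in> S \<and> k' \<noteq> k \<and> B (inv \<sigma> k) k' \<noteq> Zero \<and>
        nuv (B (inv \<sigma> k) k) + c k \<le> nuv (B (inv \<sigma> k) k') + c k'" if kS: "k \<in> S" for k
  proof (rule ccontr)
    assume nex: "\<not> ?thesis"
    let ?i = "inv \<sigma> k"
    have sik: "\<sigma> ?i = k" using sP by (simp add: permutes_inverses)
    obtain a where ba: "B ?i k = Tan a" using btan[of ?i] sik by (auto simp: tangible_def)
    obtain b where vb: "v k = Tan b" using kS tv by (auto simp: S_def tangible_vec_def tangible_def)
    have t: "B ?i k * v k = Tan (a + b)" using ba vb by (simp add: times_st_def)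
    have "\<forall>k'\<in>UNIV-{k}. B ?i k' * v k' = Zero \<or> nuv (B ?i k' * v k') < a + b"
    proof
      fix k' assume k': "k' \<in> UNIV - {k}"
      show "B ?i k' * v k' = Zero \<or> nuv (B ?i k' * v k') < a + b"
      proof (cases "B ?i k' * v k' = Zero")
        case False
        then have nz: "B ?i k' \<noteq> Zero" "v k' \<noteq> Zero" by (auto simp: mult_Zero_iff)
        have "\<not> (nuv (B ?i k) + c k \<le> nuv (B ?i k') + c k')"
          using nex nz k' by (auto simp: S_def)
        then show ?thesis using mult_nz[OF nz] ba vb by (simp add: c_def)
      qed simp
    qed
    then have "st_mulvec B v ?i = Tan (a + b)"
      unfolding st_mulvec_def using t by (intro sum_single) auto
    moreover have "ghost_or_zero (st_mulvec B v ?i)" using gh by (simp add: ghost_vec_def)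
    ultimately show False by (simp add: ghost_or_zero_def)
  qed
  then obtain f where f: "\<forall>k\<in>S. f k \<in> S \<and> f k \<noteq> k \<and> B (inv \<sigma> k) (f k) \<noteq> Zero \<and>
        nuv (B (inv \<sigma> k) k) + c k \<le> nuv (B (inv \<sigma> k) (f k)) + c (f k)"
    by metis
  have Sne: "S \<noteq> {}" using vnz by (auto simp: S_def)
  define Q where "Q C = (C \<noteq> {} \<and> C \<subseteq> S \<and> f ` C \<subseteq> C)" for C
  have "Q S" using Sne f by (auto simp: Q_def)
  then obtain C where QC: "Q C" and minC: "\<forall>D. Q D \<longrightarrow> card C \<le> card D"
    using ex_has_least_nat[of Q S card] by blast
  have "Q (f ` C)" using QC by (auto simp: Q_def)
  then have "card C \<le> card (f ` C)" using minC by blast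
  moreover have fin: "finite C" by simp
  ultimately have fC: "f ` C = C" using QC card_subset_eq[of C "f ` C"] card_image_le[of C f]
    by (auto simp: Q_def)
  then have "inj_on f C" using eq_card_imp_inj_on[OF fin, of f] fC by simp
  then have bijf: "bij_betw f C C" using fC by (simp add: bij_betw_def)
  define \<rho> where "\<rho> k = (if k \<in> C then f k else k)" for k
  have "bij_betw \<rho> C C" using bijf by (rule bij_betw_cong[THEN iffD1, rotated]) (simp add: \<rho>_def)
  then have rC: "\<rho> permutes C" by (rule bij_imp_permutes) (simp add: \<rho>_def)
  then have rP: "\<rho> permutes UNIV" by (rule permutes_subset) simp
  define \<tau> where "\<tau> = \<rho> \<circ> \<sigma>"
  have tP: "\<tau> permutes UNIV" unfolding \<tau>_def using sP rP by (rule permutes_compose)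
  obtain k0 where k0: "k0 \<in> C" using QC by (auto simp: Q_def)
  have CS: "C \<subseteq> S" using QC by (auto simp: Q_def)
  have "\<tau> (inv \<sigma> k0) \<noteq> \<sigma> (inv \<sigma> k0)"
    using k0 CS f sP by (auto simp: \<tau>_def \<rho>_def permutes_inverses)
  then have tne: "\<tau> \<noteq> \<sigma>" by metis
  have tnz: "B i (\<tau> i) \<noteq> Zero" for i
  proof (cases "\<sigma> i \<in> C")
    case True
    then have "B (inv \<sigma> (\<sigma> i)) (f (\<sigma> i)) \<noteq> Zero" using f CS by blast
    then show ?thesis using True sP by (simp add: \<tau>_def \<rho>_def permutes_inverses)
  next
    case False
    then show ?thesis using bnz by (simp add: \<tau>_def \<rho>_def)
  qed
  then have tw: "?w \<tau> \<noteq> Zero" "nuv (?w \<tau>) = (\<Sum>i\<in>UNIV. nuv (B i (\<tau> i)))"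
    using prod_nz[of UNIV "\<lambda>i. B i (\<tau> i)"] by auto
  define h1 where "h1 k = nuv (B (inv \<sigma> k) (\<rho> k))" for k
  define h0 where "h0 k = nuv (B (inv \<sigma> k) k)" for k
  have e1: "(\<Sum>i\<in>UNIV. nuv (B i (\<tau> i))) = sum h1 UNIV"
    using sum.permute[OF sP, of h1] sP by (simp add: h1_def \<tau>_def o_def permutes_inverses)
  have e0: "(\<Sum>i\<in>UNIV. nuv (B i (\<sigma> i))) = sum h0 UNIV"
    using sum.permute[OF sP, of h0] sP by (simp add: h0_def o_def permutes_inverses)
  have pw: "h0 k + c k \<le> h1 k + c (\<rho> k)" for k
    using f CS by (cases "k \<in> C") (auto simp: h0_def h1_def \<rho>_def)
  have "sum h0 UNIV + sum c UNIV \<le> sum h1 UNIV + sum (c \<circ> \<rho>) UNIV"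
    using sum_mono[of UNIV "\<lambda>k. h0 k + c k" "\<lambda>k. h1 k + c (\<rho> k)"] pw
    by (simp add: sum.distrib o_def)
  moreover have "sum (c \<circ> \<rho>) UNIV = sum c UNIV" using sum.permute[OF rP, of c] by simp
  ultimately have "sum h0 UNIV \<le> sum h1 UNIV" by simp
  then have "d \<le> nuv (?w \<tau>)" using tw e1 e0 dsum by simp
  moreover have "?w \<tau> = Zero \<or> nuv (?w \<tau>) < d" using uniq tP tne by auto
  ultimately show False using tw by simp
qed

lemma id_mulvec: "st_mulvec st_id v = (v :: ('a::linordered_ab_group_add, 'n::finite) stvec)"
proof
  fix i
  have "st_mulvec st_id v i = (\<Sum>k\<in>UNIV. if k = i then v k else Zero)"
    unfolding st_mulvec_def st_id_def
    by (intro sum.cong) (auto simp: mult_Zero_iff)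
  also have "\<dots> = v i" by (simp only: zero_st[symmetric] sum.delta) simp
  finally show "st_mulvec st_id v i = v i" .
qed

theorem lemma3p13:
  fixes A :: "('a::linordered_ab_group_add, 'n::finite) stmat"
  assumes "strongly_nonsingular A"
  shows "\<not> (\<exists>v :: ('a, 'n) stvec. v \<noteq> (\<lambda>i. Zero) \<and> tangible_vec v \<and>
           (\<exists>m. ghost_vec (st_mulvec (st_matpow A m) v)))"
proof
  assume "\<exists>v :: ('a, 'n) stvec. v \<noteq> (\<lambda>i. Zero) \<and> tangible_vec v \<and>
           (\<exists>m. ghost_vec (st_mulvec (st_matpow A m) v))"
  then obtain v m where v: "v \<noteq> (\<lambda>i. Zero)" "tangible_vec v"
    and g: "ghost_vec (st_mulvec (st_matpow A m) v)" by blast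
  show False
  proof (cases m)
    case 0
    then have "ghost_vec v" using g by (simp add: id_mulvec)
    have "v i = Zero" for i
    proof -
      have "ghost_or_zero (v i)" "v i = Zero \<or> tangible (v i)"
        using \<open>ghost_vec v\<close> v(2) by (auto simp: ghost_vec_def tangible_vec_def)
      then show ?thesis by (auto simp: ghost_or_zero_def tangible_def)
    qed
    then have "v = (\<lambda>i. Zero)" by auto
    then show False using v by simp
  next
    case (Suc k)
    then have "m \<ge> 1" by simp
    then have "st_nonsingular (st_matpow A m)" using assms unfolding strongly_nonsingular_def by blast
    then show False using main v g by blast
  qed
qed

end
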